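(* Let $f:\mathbb{R}^n\to\mathbb{R}$ and $c:\mathbb{R}^n\to\mathbb{R}^m$ ($m<n$) be smooth, with $g(x)=\nabla f(x)$ and Jacobian $J(x)=\nabla c(x)\in\mathbb{R}^{m\times n}$. Suppose noisy evaluations $\tilde f,\tilde c,\tilde g,\tilde J$ satisfy, for all $x\in\mathbb{R}^n$, $|\tilde f(x)-f(x)|\le\epsilon_f$, $\|\tilde c(x)-c(x)\|_1\le\epsilon_c$, $\|\tilde g(x)-g(x)\|\le\epsilon_g$, $\|\tilde J(x)-J(x)\|_{1,2}\le\epsilon_J$, for positive constants $\epsilon_f,\epsilon_c,\epsilon_g,\epsilon_J$. Let $\{x_k\}$ be a sequence of points, write $g_k=g(x_k)$, $c_k=c(x_k)$, $J_k=J(x_k)$, $\tilde g_k=\tilde g(x_k)$, $\tilde c_k=\tilde c(x_k)$, $\tilde J_k=\tilde J(x_k)$, and suppose there is $\gamma>\epsilon_J$ with $\sigma_{\min}(J_k)\ge\gamma$ for all $k$. Set $\delta=1/(\gamma-\epsilon_J)$ and $\eta=1/\gamma$. For $\beta_k>0$ let $d_k$ be the solution of $\min_{d\in\mathbb{R}^n}\ \tfrac12\beta_k\|d\|^2+\tilde g_k^Td$ subject to $\tilde c_k+\tilde J_kd=0$, and write $d_k=v_k+u_k$ with $v_k=-\tilde J_k^T(\tilde J_k\tilde J_k^T)^{-1}\tilde c_k$ and $u_k=-\frac{1}{\beta_k}\tilde P_k\tilde g_k$. Then $$\|v_k\|_1\le\delta\|\tilde c_k\|_1\le\delta(\|c_k\|_1+\epsilon_c),\qquad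 \|u_k\|\le\frac{1}{\beta_k}\big(\|P_kg_k\|+\|g_k\|\eta\epsilon_J+\epsilon_g\big),$$ and therefore $$\|d_k\|\le\delta(\|c_k\|_1+\epsilon_c)+\frac{1}{\beta_k}\big(\|P_kg_k\|+\|g_k\|\eta\epsilon_J+\epsilon_g\big).$$
   Context: $\|\cdot\|$ denotes the Euclidean norm. $\|\cdot\|_{1,2}$ is the matrix norm of an $m\times n$ matrix $A$ given by $\sup_{x\ne0}\|Ax\|_1/\|x\|$ (induced by the $\ell_1$ norm on $\mathbb{R}^m$ and the Euclidean norm on $\mathbb{R}^n$). $\sigma_{\min}(A)$ is the smallest singular value of $A$. $\tilde P_k=I-\tilde J_k^T(\tilde J_k\tilde J_k^T)^{-1}\tilde J_k$ and $P_k=I-J_k^T(J_kJ_k^T)^{-1}J_k$ are the orthogonal projections onto the null spaces of $\tilde J_k$ and $J_k$ respectively. Under the hypotheses, $\tilde J_k$ has full row rank so $d_k$ is well defined. *)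

theory Defs
  imports "HOL-Analysis.Analysis"
begin

definition l1norm :: "real ^ 'n \<Rightarrow> real" where
  "l1norm x = (\<Sum>i\<in>UNIV. \<bar>x $ i\<bar>)"

definition norm12 :: "real ^ 'n ^ 'm \<Rightarrow> real" where
  "norm12 A = (SUP x\<in>{x :: real ^ 'n. x \<noteq> 0}. l1norm (A *v x) / norm x)"

text \<open>Smallest singular value of an m x n matrix with m \<le> n: the square root of the
  smallest eigenvalue of A A^T (the m singular values of A are the square roots of
  the eigenvalues of A A^T).\<close>
definition sigma_min :: "real ^ 'n ^ 'm \<Rightarrow> real" where
  "sigma_min A = sqrt (Inf {lam. \<exists>v. v \<noteq> 0 \<and> (A ** transpose A) *v v = lam *s v})"

end

theory Submission
  imports Defs
begin


lemma tr_inner: fixes A :: "real^'n^'m"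
  shows "(transpose A *v y) \<bullet> z = y \<bullet> (A *v z)"
  by (simp add: dot_lmul_matrix)

lemma M_inner: fixes A :: "real^'n^'m"
  shows "y \<bullet> ((A ** transpose A) *v y) = (norm (transpose A *v y))^2"
proof -
  have "y \<bullet> ((A ** transpose A) *v y) = y \<bullet> (A *v (transpose A *v y))"
    by (simp only: matrix_vector_mul_assoc)
  also have "\<dots> = (transpose A *v y) \<bullet> (transpose A *v y)"
    by (simp only: tr_inner)
  finally show ?thesis by (simp add: power2_norm_eq_inner)
qed

lemma M_invertible: fixes A :: "real^'n^'m"
  assumes lb: "\<And>y. s * norm y \<le> norm (transpose A *v y)" and s: "s > 0"
  shows "invertible (A ** transpose A)"
proof -
  have "\<forall>y. (A ** transpose A) *v y = 0 \<longrightarrow> y = 0"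
  proof (intro allI impI)
    fix y :: "real^'m" assume "(A ** transpose A) *v y = 0"
    then have "(norm (transpose A *v y))^2 = 0" using M_inner[of y A] by simp
    then have "s * norm y \<le> 0" using lb[of y] by simp
    then show "y = 0" using s by (simp add: mult_le_0_iff)
  qed
  then have "\<exists>B. B ** (A ** transpose A) = mat 1" using matrix_left_invertible_ker by blast
  then show ?thesis using invertible_left_inverse by blast
qed

lemma minv: fixes M :: "real^'m^'m"
  assumes "invertible M"
  shows "M ** matrix_inv M = mat 1" "matrix_inv M ** M = mat 1"
proof -
  have "\<exists>A'. M ** A' = mat 1 \<and> A' ** M = mat 1" using assms invertible_def by blast
  then have "M ** matrix_inv M = mat 1 \<and> matrix_inv M ** M = mat 1"
    unfolding matrix_inv_def by (rule someI_ex)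
  then show "M ** matrix_inv M = mat 1" "matrix_inv M ** M = mat 1" by auto
qed

lemma minv_vec: fixes M :: "real^'m^'m"
  assumes "invertible M"
  shows "M *v (matrix_inv M *v c) = c"
  by (simp add: matrix_vector_mul_assoc minv[OF assms])

lemma proj: fixes A :: "real^'n^'m" and g :: "real^'n" and y :: "real^'m"
  assumes inv: "invertible (A ** transpose A)"
  defines "P \<equiv> mat 1 - transpose A ** matrix_inv (A ** transpose A) ** A"
  defines "z \<equiv> matrix_inv (A ** transpose A) *v (A *v g)"
  shows "P *v g = g - transpose A *v z"
    and "A *v (P *v g) = 0"
    and "(norm (g - transpose A *v y))^2 = (norm (P *v g))^2 + (norm (transpose A *v (z - y)))^2"
proof -
  show 1: "P *v g = g - transpose A *v z"
    unfolding P_def z_def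
    by (simp only: matrix_vector_mult_diff_rdistrib matrix_vector_mul_lid matrix_vector_mul_assoc matrix_mul_assoc)
  have "A *v (P *v g) = A *v g - (A ** transpose A) *v z"
    unfolding 1 by (simp only: matrix_vector_mult_diff_distrib matrix_vector_mul_assoc)
  also have "\<dots> = 0" unfolding z_def using minv_vec[OF inv] by simp
  finally show 2: "A *v (P *v g) = 0" .
  have e: "g - transpose A *v y = P *v g + transpose A *v (z - y)"
    unfolding 1 by (simp add: matrix_vector_mult_diff_distrib)
  have o: "(transpose A *v (z - y)) \<bullet> (P *v g) = 0"
    using 2 by (simp only: tr_inner inner_zero_right)
  show "(norm (g - transpose A *v y))^2 = (norm (P *v g))^2 + (norm (transpose A *v (z - y)))^2"
    unfolding e using o by (simp add: power2_norm_eq_inner inner_add inner_commute)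
qed



lemma quad_zero: fixes a b :: real
  assumes "a \<ge> 0" "\<And>t. 2*t*b + t^2*a \<ge> 0" shows "b = 0"
proof -
  define t where "t = -b/(a+1)"
  have s: "a + 1 > 0" using assms(1) by simp
  have ht: "t*(a+1) = -b" unfolding t_def using s by simp
  have "(a+1)^2 * (2*t*b + t^2*a) = 2*(t*(a+1))*b*(a+1) + (t*(a+1))^2*a"
    by (simp add: algebra_simps power2_eq_square)
  also have "\<dots> = -(b^2*(a+2))" unfolding ht by (simp add: algebra_simps power2_eq_square)
  finally have "(a+1)^2 * (2*t*b + t^2*a) = -(b^2*(a+2))" .
  moreover have "(a+1)^2 * (2*t*b + t^2*a) \<ge> 0" using assms(2)[of t] by simp
  ultimately have "b^2*(a+2) \<le> 0" by linarith
  then have "b^2 \<le> 0" using assms(1) by (smt (verit) mult_le_0_iff zero_le_power2)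
  then show ?thesis by simp
qed

lemma nsq_expand: fixes a b :: "'a::real_inner"
  shows "(norm (a + t *\<^sub>R b))^2 = (norm a)^2 + 2*t*(a \<bullet> b) + t^2*(norm b)^2"
proof -
  have "(norm (a + t *\<^sub>R b))^2 = (a + t *\<^sub>R b) \<bullet> (a + t *\<^sub>R b)"
    by (simp only: power2_norm_eq_inner)
  also have "\<dots> = a \<bullet> a + 2*t*(a \<bullet> b) + t^2*(b \<bullet> b)"
    by (simp add: inner_add_left inner_add_right inner_commute algebra_simps power2_eq_square)
  finally show ?thesis by (simp only: power2_norm_eq_inner)
qed

lemma sigma_lb: fixes A :: "real^'n^'m"
  assumes sg: "sigma_min A \<ge> \<gamma>" and gp: "\<gamma> > 0"
  shows "\<gamma> * norm y \<le> norm (transpose A *v y)"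
proof -
  define R where "R = (\<lambda>y::real^'m. (norm (transpose A *v y))^2)"
  define M where "M = A ** transpose A"
  have cR: "continuous_on (sphere 0 1) R" unfolding R_def
    by (intro continuous_intros linear_continuous_on bounded_linear_intros)
  have ne: "sphere (0::real^'m) 1 \<noteq> {}"
    using norm_axis_1 by (metis dist_0_norm mem_sphere empty_iff)
  obtain y0 where y0: "y0 \<in> sphere 0 1" and y0min: "\<And>y. y \<in> sphere 0 1 \<Longrightarrow> R y0 \<le> R y"
    using continuous_attains_inf[OF compact_sphere ne cR] by blast
  have ny0: "norm y0 = 1" using y0 by simp
  define l where "l = R y0"
  have lin: "\<And>a b. transpose A *v (a + b) = transpose A *v a + transpose A *v b"
    by (simp only: matrix_vector_right_distrib)
  have lsc: "\<And>t a. transpose A *v (t *\<^sub>R a) = t *\<^sub>R (transpose A *v a)"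
    by (simp only: matrix_scaleR_vector_ac scaleR_matrix_vector_assoc)
  have ray: "l * (norm y)^2 \<le> R y" for y
  proof (cases "y = 0")
    case True then show ?thesis by (simp add: R_def)
  next
    case False
    have "(1/norm y) *\<^sub>R y \<in> sphere 0 1" using False by simp
    then have "l \<le> R ((1/norm y) *\<^sub>R y)" using y0min l_def by blast
    also have "\<dots> = R y / (norm y)^2" unfolding R_def lsc
      by (simp add: power_divide)
    finally show ?thesis using False by (simp add: field_simps)
  qed
  have eig: "M *v y0 = l *s y0"
  proof -
    have orth: "z \<bullet> (M *v y0 - l *\<^sub>R y0) = 0" for z
    proof -
      define a where "a = (norm (transpose A *v z))^2 - l * (norm z)^2"
      define b where "b = (transpose A *v y0) \<bullet> (transpose A *v z) - l * (y0 \<bullet> z)"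
      have a0: "a \<ge> 0" using ray[of z] unfolding a_def R_def by simp
      have "2*t*b + t^2*a \<ge> 0" for t
      proof -
        have "l * (norm (y0 + t *\<^sub>R z))^2 \<le> R (y0 + t *\<^sub>R z)" by (rule ray)
        moreover have "R (y0 + t *\<^sub>R z) = l + 2*t*((transpose A *v y0) \<bullet> (transpose A *v z)) + t^2 * (norm (transpose A *v z))^2"
          unfolding R_def lin lsc l_def nsq_expand ..
        moreover have "(norm (y0 + t *\<^sub>R z))^2 = 1 + 2*t*(y0 \<bullet> z) + t^2 * (norm z)^2"
          using ny0 by (simp only: nsq_expand) simp
        ultimately show ?thesis unfolding a_def b_def by (simp add: algebra_simps)
      qed
      then have "b = 0" using quad_zero a0 by blast
      moreover have "(transpose A *v y0) \<bullet> (transpose A *v z) = z \<bullet> (M *v y0)"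
        unfolding M_def
        by (metis inner_commute matrix_vector_mul_assoc tr_inner)
      moreover have "z \<bullet> (M *v y0 - l *\<^sub>R y0) = z \<bullet> (M *v y0) - l * (y0 \<bullet> z)"
        by (simp only: inner_diff_right inner_scaleR_right inner_commute[of y0 z])
      ultimately show ?thesis unfolding b_def by linarith
    qed
    from orth[of "M *v y0 - l *\<^sub>R y0"] have "M *v y0 - l *\<^sub>R y0 = 0" by simp
    then show ?thesis by (simp add: scalar_mult_eq_scaleR)
  qed
  define E where "E = {lam. \<exists>v. v \<noteq> 0 \<and> (A ** transpose A) *v v = lam *s v}"
  have lE: "l \<in> E" unfolding E_def M_def[symmetric] using eig ny0 by (intro CollectI exI[of _ y0]) auto
  have bdd: "bdd_below E"
  proof (rule bdd_belowI[of _ 0])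
    fix lam assume "lam \<in> E"
    then obtain v where v: "v \<noteq> 0" "(A ** transpose A) *v v = lam *s v" unfolding E_def by blast
    have "lam * (norm v)^2 = v \<bullet> ((A ** transpose A) *v v)"
      using v by (simp add: scalar_mult_eq_scaleR power2_norm_eq_inner)
    also have "\<dots> \<ge> 0" by (simp add: M_inner)
    finally show "0 \<le> lam" using v by (simp add: zero_le_mult_iff)
  qed
  have "Inf E \<le> l" using cInf_lower[OF lE bdd] .
  have sq: "\<gamma> \<le> sqrt (Inf E)" using sg unfolding sigma_min_def E_def by simp
  have "\<not> Inf E < 0"
  proof
    assume "Inf E < 0" then have "sqrt (Inf E) < 0" by simp
    with sq gp show False by linarith
  qed
  then have "Inf E \<ge> 0" by simp
  have "\<gamma>^2 \<le> (sqrt (Inf E))^2" using power_mono[OF sq, of 2] gp by simp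
  then have "\<gamma>^2 \<le> Inf E" using \<open>Inf E \<ge> 0\<close> by simp
  then have "\<gamma>^2 \<le> l" using \<open>Inf E \<le> l\<close> by linarith
  then have "\<gamma>^2 * (norm y)^2 \<le> R y" using ray[of y]
    using mult_right_mono[OF \<open>\<gamma>^2 \<le> l\<close> zero_le_power2[of "norm y"]] by linarith
  then have "(\<gamma> * norm y)^2 \<le> (norm (transpose A *v y))^2" unfolding R_def by (simp add: power_mult_distrib)
  then show ?thesis by (rule power2_le_imp_le) simp
qed



lemma l1_bound: fixes E :: "real^'n^'m"
  shows "l1norm (E *v x) \<le> (\<Sum>i\<in>UNIV. \<Sum>j\<in>UNIV. \<bar>E$i$j\<bar>) * norm x"
proof -
  have "l1norm (E *v x) = (\<Sum>i\<in>UNIV. \<bar>\<Sum>j\<in>UNIV. E$i$j * x$j\<bar>)"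
    unfolding l1norm_def matrix_vector_mult_def by simp
  also have "\<dots> \<le> (\<Sum>i\<in>UNIV. \<Sum>j\<in>UNIV. \<bar>E$i$j\<bar> * norm x)"
  proof (rule sum_mono)
    fix i
    have "\<bar>\<Sum>j\<in>UNIV. E$i$j * x$j\<bar> \<le> (\<Sum>j\<in>UNIV. \<bar>E$i$j * x$j\<bar>)" by (rule sum_abs)
    also have "\<dots> \<le> (\<Sum>j\<in>UNIV. \<bar>E$i$j\<bar> * norm x)"
    proof (rule sum_mono)
      fix j show "\<bar>E$i$j * x$j\<bar> \<le> \<bar>E$i$j\<bar> * norm x"
        unfolding abs_mult by (rule mult_left_mono) (auto simp: component_le_norm_cart)
    qed
    finally show "\<bar>\<Sum>j\<in>UNIV. E$i$j * x$j\<bar> \<le> (\<Sum>j\<in>UNIV. \<bar>E$i$j\<bar> * norm x)" .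
  qed
  also have "\<dots> = (\<Sum>i\<in>UNIV. \<Sum>j\<in>UNIV. \<bar>E$i$j\<bar>) * norm x"
    by (simp add: sum_distrib_right)
  finally show ?thesis .
qed

lemma norm12_bound: fixes E :: "real^'n^'m"
  assumes "norm12 E \<le> e" shows "norm (E *v x) \<le> e * norm x"
proof (cases "x = 0")
  case True then show ?thesis by simp
next
  case False
  define K where "K = (\<Sum>i\<in>UNIV. \<Sum>j\<in>UNIV. \<bar>E$i$j\<bar>)"
  have bdd: "bdd_above ((\<lambda>x. l1norm (E *v x) / norm x) ` {x. x \<noteq> 0})"
  proof (rule bdd_aboveI2)
    fix x :: "real^'n" assume "x \<in> {x. x \<noteq> 0}"
    then have "norm x > 0" by simp
    then show "l1norm (E *v x) / norm x \<le> K"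
      using l1_bound[of E x] unfolding K_def by (simp add: divide_le_eq)
  qed
  have "l1norm (E *v x) / norm x \<le> norm12 E"
    unfolding norm12_def using False by (intro cSUP_upper bdd) simp
  then have "l1norm (E *v x) / norm x \<le> e" using assms by linarith
  then have "l1norm (E *v x) \<le> e * norm x" using False by (simp add: divide_le_eq)
  moreover have "norm (E *v x) \<le> l1norm (E *v x)" unfolding l1norm_def by (rule norm_le_l1_cart)
  ultimately show ?thesis by linarith
qed

lemma norm12_bound_tr: fixes E :: "real^'n^'m"
  assumes "norm12 E \<le> e" "e \<ge> 0" shows "norm (transpose E *v y) \<le> e * norm y"
proof -
  let ?w = "transpose E *v y"
  have "(norm ?w)^2 = y \<bullet> (E *v ?w)" by (simp only: power2_norm_eq_inner tr_inner)
  also have "\<dots> \<le> norm y * norm (E *v ?w)" by (rule norm_cauchy_schwarz)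
  also have "\<dots> \<le> norm y * (e * norm ?w)"
    by (rule mult_left_mono[OF norm12_bound[OF assms(1)]]) simp
  finally have "norm ?w * norm ?w \<le> (e * norm y) * norm ?w" by (simp add: power2_eq_square algebra_simps)
  then show ?thesis
    by (cases "norm ?w = 0") (use assms(2) in auto)
qed

lemma transpose_diff: fixes A B :: "real^'n^'m"
  shows "transpose (A - B) = transpose A - transpose B"
  by (simp add: transpose_def vec_eq_iff)

lemma weyl: fixes A B :: "real^'n^'m"
  assumes "\<And>y. g * norm y \<le> norm (transpose A *v y)" "norm12 (B - A) \<le> e" "e \<ge> 0"
  shows "(g - e) * norm y \<le> norm (transpose B *v y)"
proof -
  have "transpose B *v y = transpose A *v y + transpose (B - A) *v y"
    by (simp add: transpose_diff matrix_vector_mult_diff_rdistrib)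
  then have "norm (transpose A *v y) \<le> norm (transpose B *v y) + norm (transpose (B - A) *v y)"
    by (metis add_diff_cancel_right' norm_triangle_ineq4)
  moreover have "norm (transpose (B - A) *v y) \<le> e * norm y" by (rule norm12_bound_tr[OF assms(2,3)])
  ultimately show ?thesis using assms(1)[of y] by (simp add: algebra_simps)
qed



lemma mvneg: fixes A :: "real^'n^'m" shows "A *v (- x) = - (A *v x)"
  by (simp add: matrix_vector_mult_def vec_eq_iff sum_negf)

lemma mvscale: fixes A :: "real^'n^'m" shows "A *v (k *\<^sub>R x) = k *\<^sub>R (A *v x)"
  by (simp only: matrix_scaleR_vector_ac scaleR_matrix_vector_assoc)

lemma proj_le: fixes A :: "real^'n^'m"
  assumes inv: "invertible (A ** transpose A)"
  shows "norm ((mat 1 - transpose A ** matrix_inv (A ** transpose A) ** A) *v x) \<le> norm x"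
proof -
  have "(norm (x - transpose A *v 0))^2 = (norm ((mat 1 - transpose A ** matrix_inv (A ** transpose A) ** A) *v x))^2
     + (norm (transpose A *v (matrix_inv (A ** transpose A) *v (A *v x) - 0)))^2"
    by (rule proj(3)[OF inv])
  then have "(norm ((mat 1 - transpose A ** matrix_inv (A ** transpose A) ** A) *v x))^2 \<le> (norm x)^2"
    by simp
  then show ?thesis by (rule power2_le_imp_le) simp
qed

lemma l1_tri: "l1norm (a::real^'m) \<le> l1norm b + l1norm (a - b)"
proof -
  have "l1norm a \<le> (\<Sum>i\<in>UNIV. \<bar>b$i\<bar> + \<bar>a$i - b$i\<bar>)"
    unfolding l1norm_def by (rule sum_mono) linarith
  then show ?thesis unfolding l1norm_def by (simp add: sum.distrib)
qed

lemma core: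
  fixes Jk Jtk :: "real^'n^'m" and gk gtk dk :: "real^'n" and ck ctk :: "real^'m"
    and \<gamma> eps_J eps_c eps_g \<beta> :: real
  assumes lbJ: "\<And>y. \<gamma> * norm y \<le> norm (transpose Jk *v y)" and gp: "\<gamma> > 0"
    and eJ: "norm12 (Jtk - Jk) \<le> eps_J" and eJp: "eps_J > 0" and gam: "\<gamma> > eps_J"
    and ec: "l1norm (ctk - ck) \<le> eps_c"
    and eg: "norm (gtk - gk) \<le> eps_g"
    and bp: "\<beta> > 0"
    and feas: "ctk + Jtk *v dk = 0"
    and dmin: "\<And>e. ctk + Jtk *v e = 0 \<Longrightarrow>
                 1/2 * \<beta> * (norm dk)\<^sup>2 + gtk \<bullet> dk \<le> 1/2 * \<beta> * (norm e)\<^sup>2 + gtk \<bullet> e"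
  defines "\<delta> \<equiv> 1 / (\<gamma> - eps_J)" and "\<eta> \<equiv> 1 / \<gamma>"
    and "Ptk \<equiv> mat 1 - transpose Jtk ** matrix_inv (Jtk ** transpose Jtk) ** Jtk"
    and "Pk \<equiv> mat 1 - transpose Jk ** matrix_inv (Jk ** transpose Jk) ** Jk"
    and "vk \<equiv> - (transpose Jtk *v (matrix_inv (Jtk ** transpose Jtk) *v ctk))"
    and "uk \<equiv> - ((1 / \<beta>) *\<^sub>R ((mat 1 - transpose Jtk ** matrix_inv (Jtk ** transpose Jtk) ** Jtk) *v gtk))"
    and "B \<equiv> norm ((mat 1 - transpose Jk ** matrix_inv (Jk ** transpose Jk) ** Jk) *v gk) + norm gk * (1 / \<gamma>) * eps_J + eps_g"
  shows "dk = vk + uk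
        \<and> norm vk \<le> \<delta> * l1norm ctk
        \<and> \<delta> * l1norm ctk \<le> \<delta> * (l1norm ck + eps_c)
        \<and> norm uk \<le> (1 / \<beta>) * B
        \<and> norm dk \<le> \<delta> * (l1norm ck + eps_c) + (1 / \<beta>) * B"
proof -
  have uk_def: "uk = - ((1 / \<beta>) *\<^sub>R (Ptk *v gtk))" unfolding uk_def Ptk_def ..
  have B_def: "B = norm (Pk *v gk) + norm gk * \<eta> * eps_J + eps_g" unfolding B_def Pk_def \<eta>_def ..
  define s where "s = \<gamma> - eps_J"
  have sp: "s > 0" using gam s_def by simp
  have lbJt: "\<And>y. s * norm y \<le> norm (transpose Jtk *v y)"
    unfolding s_def by (rule weyl[OF lbJ eJ]) (use eJp in simp)
  have invt: "invertible (Jtk ** transpose Jtk)" by (rule M_invertible[OF lbJt sp])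
  have inv: "invertible (Jk ** transpose Jk)" by (rule M_invertible[OF lbJ gp])
  define Mi where "Mi = matrix_inv (Jtk ** transpose Jtk)"
  define zc where "zc = Mi *v ctk"
  define zg where "zg = Mi *v (Jtk *v gtk)"
  have vk_eq: "vk = - (transpose Jtk *v zc)" unfolding vk_def zc_def Mi_def ..
  have Pg: "Ptk *v gtk = gtk - transpose Jtk *v zg" and JPg: "Jtk *v (Ptk *v gtk) = 0"
    unfolding Ptk_def zg_def Mi_def using proj[OF invt, of gtk] by auto
  have Mzc: "(Jtk ** transpose Jtk) *v zc = ctk" unfolding zc_def Mi_def by (rule minv_vec[OF invt])
  have Jv: "Jtk *v vk = - ctk"
    unfolding vk_eq mvneg matrix_vector_mul_assoc Mzc ..
  have Ju: "Jtk *v uk = 0" unfolding uk_def mvneg mvscale JPg by simp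
  define p where "p = vk + uk"
  define w where "w = dk - p"
  have Jp: "Jtk *v p = - ctk" unfolding p_def matrix_vector_right_distrib Jv Ju by simp
  have Jd: "Jtk *v dk = - ctk" using feas by (simp add: add_eq_0_iff)
  have Jw: "Jtk *v w = 0" unfolding w_def matrix_vector_mult_diff_distrib Jd Jp by simp
  have vw: "vk \<bullet> w = 0" unfolding vk_eq inner_minus_left tr_inner Jw by simp
  have gw: "(Ptk *v gtk) \<bullet> w = gtk \<bullet> w" unfolding Pg inner_diff_left tr_inner Jw by simp
  have uw: "uk \<bullet> w = -(1/\<beta>) * (gtk \<bullet> w)" unfolding uk_def inner_minus_left inner_scaleR_left gw by simp
  have pw: "\<beta> * (p \<bullet> w) = - (gtk \<bullet> w)" unfolding p_def inner_add_left vw uw using bp by simp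
  have dpw: "dk = p + w" unfolding w_def by simp
  have "(norm dk)^2 = (norm p)^2 + 2*(p \<bullet> w) + (norm w)^2"
    unfolding dpw using nsq_expand[of p 1 w] by simp
  moreover have "1/2 * \<beta> * (norm dk)\<^sup>2 + gtk \<bullet> dk \<le> 1/2 * \<beta> * (norm p)\<^sup>2 + gtk \<bullet> p"
    by (rule dmin) (simp add: Jp)
  moreover have "gtk \<bullet> dk = gtk \<bullet> p + gtk \<bullet> w" unfolding dpw inner_add_right ..
  ultimately have "1/2 * \<beta> * (norm w)^2 \<le> 0" using pw by (simp add: algebra_simps)
  then have "w = 0" using bp by (simp add: mult_le_0_iff)
  then have d_eq: "dk = vk + uk" using dpw p_def by simp
  have nv: "norm vk = norm (transpose Jtk *v zc)" unfolding vk_eq by simp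
  have "(norm vk)^2 = zc \<bullet> ctk" unfolding nv M_inner[symmetric] Mzc ..
  also have "\<dots> \<le> norm zc * norm ctk" by (rule norm_cauchy_schwarz)
  finally have v1: "(norm vk)^2 \<le> norm zc * norm ctk" .
  have v2: "s * norm zc \<le> norm vk" unfolding nv by (rule lbJt)
  have "s * norm vk \<le> norm ctk"
  proof (cases "norm vk = 0")
    case True then show ?thesis by simp
  next
    case False
    then have vp: "norm vk > 0" by simp
    have "s * ((norm vk)^2) \<le> s * (norm zc * norm ctk)" using v1 sp by simp
    also have "\<dots> \<le> norm vk * norm ctk" using mult_right_mono[OF v2 norm_ge_zero[of ctk]] by (simp add: algebra_simps)
    finally have "norm vk * (s * norm vk) \<le> norm vk * norm ctk" by (simp add: power2_eq_square algebra_simps)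
    then show ?thesis using vp by simp
  qed
  then have "norm vk \<le> norm ctk / s" using sp by (simp add: field_simps)
  also have "\<dots> \<le> l1norm ctk / s" using sp unfolding l1norm_def
    by (simp add: divide_right_mono norm_le_l1_cart)
  finally have bv: "norm vk \<le> \<delta> * l1norm ctk" unfolding \<delta>_def s_def by simp
  have dp: "\<delta> > 0" unfolding \<delta>_def using gam by simp
  have "l1norm ctk \<le> l1norm ck + eps_c" using l1_tri[of ctk ck] ec by linarith
  then have bc: "\<delta> * l1norm ctk \<le> \<delta> * (l1norm ck + eps_c)" using dp by simp
  define ys where "ys = matrix_inv (Jk ** transpose Jk) *v (Jk *v gk)"
  have Pkg: "Pk *v gk = gk - transpose Jk *v ys" unfolding Pk_def ys_def using proj(1)[OF inv] by blast
  have "(norm (gk - transpose Jk *v 0))^2 = (norm (Pk *v gk))^2 + (norm (transpose Jk *v (ys - 0)))^2"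
    unfolding Pk_def ys_def by (rule proj(3)[OF inv])
  then have "(norm (transpose Jk *v ys))^2 \<le> (norm gk)^2" by simp
  then have "norm (transpose Jk *v ys) \<le> norm gk" by (rule power2_le_imp_le) simp
  then have "\<gamma> * norm ys \<le> norm gk" using lbJ[of ys] by linarith
  then have nys: "norm ys \<le> norm gk * \<eta>" unfolding \<eta>_def using gp by (simp add: field_simps)
  have "(norm (gk - transpose Jtk *v ys))^2 = (norm (Ptk *v gk))^2 + (norm (transpose Jtk *v (matrix_inv (Jtk ** transpose Jtk) *v (Jtk *v gk) - ys)))^2"
    unfolding Ptk_def by (rule proj(3)[OF invt])
  then have "(norm (Ptk *v gk))^2 \<le> (norm (gk - transpose Jtk *v ys))^2" by simp
  then have p1: "norm (Ptk *v gk) \<le> norm (gk - transpose Jtk *v ys)" by (rule power2_le_imp_le) simp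
  have "gk - transpose Jtk *v ys = Pk *v gk - transpose (Jtk - Jk) *v ys"
    unfolding Pkg transpose_diff matrix_vector_mult_diff_rdistrib by simp
  then have "norm (gk - transpose Jtk *v ys) \<le> norm (Pk *v gk) + norm (transpose (Jtk - Jk) *v ys)"
    by (simp add: norm_triangle_ineq4)
  also have "norm (transpose (Jtk - Jk) *v ys) \<le> eps_J * norm ys"
    by (rule norm12_bound_tr[OF eJ]) (use eJp in simp)
  also have "eps_J * norm ys \<le> eps_J * (norm gk * \<eta>)" using nys eJp by simp
  finally have p2: "norm (Ptk *v gk) \<le> norm (Pk *v gk) + norm gk * \<eta> * eps_J"
    using p1 by (simp add: algebra_simps)
  have "Ptk *v gtk = Ptk *v gk + Ptk *v (gtk - gk)"
    by (simp add: matrix_vector_mult_diff_distrib)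
  then have "norm (Ptk *v gtk) \<le> norm (Ptk *v gk) + norm (Ptk *v (gtk - gk))"
    by (simp add: norm_triangle_ineq)
  also have "norm (Ptk *v (gtk - gk)) \<le> eps_g"
    using proj_le[OF invt, of "gtk - gk"] eg unfolding Ptk_def by linarith
  finally have pB: "norm (Ptk *v gtk) \<le> B" unfolding B_def using p2 by linarith
  have nu: "norm uk = (1/\<beta>) * norm (Ptk *v gtk)" unfolding uk_def using bp by simp
  have bu: "norm uk \<le> (1/\<beta>) * B" unfolding nu using pB bp by (simp add: divide_right_mono)
  have "norm dk \<le> norm vk + norm uk" unfolding d_eq by (rule norm_triangle_ineq)
  then have "norm dk \<le> \<delta> * (l1norm ck + eps_c) + (1 / \<beta>) * B" using bv bc bu by linarith
  then show ?thesis using d_eq bv bc bu by blast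
qed


theorem lemma3p1:
  fixes f :: "real ^ 'n \<Rightarrow> real" and c :: "real ^ 'n \<Rightarrow> real ^ 'm"
    and g :: "real ^ 'n \<Rightarrow> real ^ 'n" and J :: "real ^ 'n \<Rightarrow> real ^ 'n ^ 'm"
    and ft :: "real ^ 'n \<Rightarrow> real" and ct :: "real ^ 'n \<Rightarrow> real ^ 'm"
    and gt :: "real ^ 'n \<Rightarrow> real ^ 'n" and Jt :: "real ^ 'n \<Rightarrow> real ^ 'n ^ 'm"
    and eps_f eps_c eps_g eps_J \<gamma> :: real
    and x :: "nat \<Rightarrow> real ^ 'n" and \<beta> :: "nat \<Rightarrow> real" and d :: "nat \<Rightarrow> real ^ 'n"
  assumes dims: "CARD('m) < CARD('n)"
    and f_deriv: "\<And>y. (f has_derivative (\<lambda>h. g y \<bullet> h)) (at y)"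
    and c_deriv: "\<And>y. (c has_derivative (\<lambda>h. J y *v h)) (at y)"
    and g_cont: "continuous_on UNIV g" and J_cont: "continuous_on UNIV J"
    and eps_pos: "eps_f > 0" "eps_c > 0" "eps_g > 0" "eps_J > 0"
    and noise_f: "\<And>y. \<bar>ft y - f y\<bar> \<le> eps_f"
    and noise_c: "\<And>y. l1norm (ct y - c y) \<le> eps_c"
    and noise_g: "\<And>y. norm (gt y - g y) \<le> eps_g"
    and noise_J: "\<And>y. norm12 (Jt y - J y) \<le> eps_J"
    and gamma: "\<gamma> > eps_J"
    and sigma: "\<And>k. sigma_min (J (x k)) \<ge> \<gamma>"
    and beta_pos: "\<And>k. \<beta> k > 0"
    and d_feas: "\<And>k. ct (x k) + Jt (x k) *v d k = 0"
    and d_min: "\<And>k e. ct (x k) + Jt (x k) *v e = 0 \<Longrightarrow>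
                 1/2 * \<beta> k * (norm (d k))\<^sup>2 + gt (x k) \<bullet> d k
                 \<le> 1/2 * \<beta> k * (norm e)\<^sup>2 + gt (x k) \<bullet> e"
  shows "\<forall>k.
    (let \<delta> = 1 / (\<gamma> - eps_J); \<eta> = 1 / \<gamma>;
         gk = g (x k); ck = c (x k); Jk = J (x k);
         gtk = gt (x k); ctk = ct (x k); Jtk = Jt (x k);
         Ptk = mat 1 - transpose Jtk ** matrix_inv (Jtk ** transpose Jtk) ** Jtk;
         Pk = mat 1 - transpose Jk ** matrix_inv (Jk ** transpose Jk) ** Jk;
         vk = - (transpose Jtk *v (matrix_inv (Jtk ** transpose Jtk) *v ctk));
         uk = - ((1 / \<beta> k) *\<^sub>R (Ptk *v gtk));
         B = norm (Pk *v gk) + norm gk * \<eta> * eps_J + eps_g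
     in d k = vk + uk
        \<and> norm vk \<le> \<delta> * l1norm ctk
        \<and> \<delta> * l1norm ctk \<le> \<delta> * (l1norm ck + eps_c)
        \<and> norm uk \<le> (1 / \<beta> k) * B
        \<and> norm (d k) \<le> \<delta> * (l1norm ck + eps_c) + (1 / \<beta> k) * B)"
  proof (intro allI)
  fix k
  have gp: "\<gamma> > 0" using gamma eps_pos by linarith
  have lb: "\<And>y. \<gamma> * norm y \<le> norm (transpose (J (x k)) *v y)"
    by (rule sigma_lb[OF sigma gp])
  note C = core[OF lb gp noise_J[of "x k"] eps_pos(4) gamma noise_c[of "x k"] noise_g[of "x k"]
      beta_pos[of k] d_feas[of k] d_min[of k]]
  show "let \<delta> = 1 / (\<gamma> - eps_J); \<eta> = 1 / \<gamma>;
         gk = g (x k); ck = c (x k); Jk = J (x k);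
         gtk = gt (x k); ctk = ct (x k); Jtk = Jt (x k);
         Ptk = mat 1 - transpose Jtk ** matrix_inv (Jtk ** transpose Jtk) ** Jtk;
         Pk = mat 1 - transpose Jk ** matrix_inv (Jk ** transpose Jk) ** Jk;
         vk = - (transpose Jtk *v (matrix_inv (Jtk ** transpose Jtk) *v ctk));
         uk = - ((1 / \<beta> k) *\<^sub>R (Ptk *v gtk));
         B = norm (Pk *v gk) + norm gk * \<eta> * eps_J + eps_g
     in d k = vk + uk
        \<and> norm vk \<le> \<delta> * l1norm ctk
        \<and> \<delta> * l1norm ctk \<le> \<delta> * (l1norm ck + eps_c)
        \<and> norm uk \<le> (1 / \<beta> k) * B
        \<and> norm (d k) \<le> \<delta> * (l1norm ck + eps_c) + (1 / \<beta> k) * B"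
    unfolding Let_def by (rule C)
qed

end
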